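(* Consider the algorithm described in the context, suppose it does not terminate after finitely many steps, that the iterates are bounded (there is $R>0$ with $\{x^k\}\subseteq B_R(0)$), and that condition (B.3) holds: for every subsequence $\{k_\ell\}$ such that $\{x^{k_\ell}\}$ converges and $\alpha_{k_\ell}\to0$, $\psi(x^{k_\ell}+\alpha_{k_\ell}\bar s^{k_\ell})-\psi(x^{k_\ell})-\alpha_{k_\ell}\psi'(x^{k_\ell};\bar s^{k_\ell})=o(\alpha_{k_\ell})$ as $\ell\to\infty$. Then there exists a function $h:(0,\infty)\to[0,\infty]$ with $\lim_{\Delta\to0^+}h(\Delta)=0$ such that for every $\Delta>0$ and every $k$ with $\Delta_k\le\Delta$, $$\psi(x^k+\alpha_k\bar s^k)-\psi(x^k)-\alpha_k\psi'(x^k;\bar s^k)\le h(\Delta)\,\alpha_k.$$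
   Context: Problem: minimize $\psi=f+\varphi$ where $f:\mathbb{R}^n\to\mathbb{R}$ is continuously differentiable and $\varphi:\mathbb{R}^n\to\mathbb{R}$ is convex. Notation: $\|\cdot\|$ Euclidean norm, $B_r(x)$ open ball, $\bar v=v/\|v\|$, $\psi'(x;d)$ directional derivative, $\partial\psi(x)=\nabla f(x)+\partial\varphi(x)$; $x$ is stationary if $0\in\partial\psi(x)$. Pseudo-gradient: $g(x)=u(x)d(x)$ where, for non-stationary $x$, $\|d(x)\|=1$, $\psi'(x;d(x))<0$, $u(x)\in[\psi'(x;d(x)),0)$, and for stationary $x$, $d(x)=0$, $u(x)=0$. Safeguards: for $\|d\|=1$, $\Gamma_{\max}(x,d)=\sup\{T>0: t\mapsto\psi(x+td)\text{ is } C^1\text{ on }(0,T)\}$, $\Gamma(x)=\inf_{\|d\|=1}\Gamma_{\max}(x,d)$; a stepsize safeguard $(x,d)\mapsto\Gamma(x,d)\in(0,\infty]$ is fixed. Truncation: $\psi$ can be truncated with data $\mathbb{R}^n=S_0\supset\cdots\supset S_m$, $\delta\in(0,\infty]$, $\kappa>0$, $T:\mathbb{R}^n\times(0,\delta]\to\mathbb{R}^n$ meaning (i) $\Gamma(x)\ge\delta$ on $S_m$; (ii) for $a\in(0,\delta]$, $x\in S_i\setminus S_{i+1}$, $i<m$: if $\Gamma(x)\ge a$ then $T(x,a)=x$, else $T(x,a)\in S_{i+1}$, $\Gamma(T(x,a))\ge a$, $\|T(x,a)-x\|\le\kappa a$. Put $S_{m+1}=\emptyset$. Algorithm: parameters $0<\eta<\eta_1<\eta_2<1$,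 $0<r_1<1<r_2$, $\Delta_{\max}>0$, $\gamma_1,\gamma_2>0$, a positive strictly decreasing summable sequence $(\epsilon_s)$ with $\epsilon_s\le\delta$, a nonincreasing $\ell:(0,\infty)\to[0,\frac12]$ with $\ell(\Delta)\to0$ as $\Delta\to0^+$; start $x^0$, $\Delta_0>0$, counters $c_0=\dots=c_m=0$. Iteration $k$: $g^k=g(x^k)$; stop if $g^k=0$. Choose $B^k\in\mathbb{R}^{n\times n}$, model $m_k(s)=\psi(x^k)+\langle g^k,s\rangle+\frac12\langle s,B^ks\rangle$, Cauchy point $s^k_C=-\alpha^C_kg^k$ with $\alpha^C_k\in\arg\min_{0\le t\le\Delta_k/\|g^k\|}m_k(-tg^k)$. Choose $s^k$, $\|s^k\|\le\Delta_k$, with $m_k(0)-m_k(s^k)\ge\frac{\gamma_1}{2}\|g^k\|\min\{\Delta_k,\gamma_2\|g^k\|\}$ and $m_k(0)-m_k(s^k)\ge(1-\ell(\|s^k\|))(m_k(0)-m_k(s^k_C))$. Let $\rho^1_k=\frac{\psi(x^k)-\psi(x^k+s^k)}{m_k(0)-m_k(s^k)}$. If $\rho^1_k\ge\eta_1$: $\tilde x^k=x^k+s^k$, $\Delta_{k+1}=\min\{\Delta_{\max},r_2\Delta_k\}$ if $\rho^1_k>\eta_2$ and $\Delta_{k+1}=\Delta_k$ otherwise. Stepsize computation (performed for the analysis in every iteration, used by the algorithm when $\rho^1_k<\eta_1$): $\alpha_k=\min\{\Gamma(x^k,\bar s^k),\|s^k\|\}$; if $m_k(0)-m_k(\alpha_k\bar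 s^k)<\frac{\alpha_k}{2\|s^k\|}(m_k(0)-m_k(s^k))$, replace $s^k$ by $s^k_C$ and $\alpha_k=\min\{\Gamma(x^k,\bar s^k_C),\|s^k_C\|\}$; $\rho^2_k=\frac{\psi(x^k)-\psi(x^k+\alpha_k\bar s^k)}{m_k(0)-m_k(\alpha_k\bar s^k)}$. If $\rho^1_k<\eta_1$: $\Delta_{k+1}=r_1\Delta_k$ if $\rho^2_k<\eta_1$, $=\min\{\Delta_{\max},r_2\Delta_k\}$ if $\rho^2_k>\eta_2$, $=\Delta_k$ otherwise; $\tilde x^k=x^k+\alpha_k\bar s^k$ if $\rho^2_k\ge\eta$ and $\tilde x^k=x^k$ otherwise. Truncation step: set $\tilde x=\tilde x^k$ and repeat {find $i$ with $\tilde x\in S_i\setminus S_{i+1}$; if $\Gamma(\tilde x)<\epsilon_{c_i}$ set $\tilde x\leftarrow T(\tilde x,\epsilon_{c_i})$, $c_i\leftarrow c_i+1$; else stop}; $x^{k+1}=\tilde x$. Here $\alpha_k,\bar s^k$ denote the quantities of the stepsize computation. *)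

theory Defs
  imports "HOL-Analysis.Analysis" "HOL-Library.Landau_Symbols"
begin

definition dirderiv :: "('a::real_normed_vector \<Rightarrow> real) \<Rightarrow> 'a \<Rightarrow> 'a \<Rightarrow> real" where
  "dirderiv \<psi> x v = Lim (at_right 0) (\<lambda>t. (\<psi> (x + t *\<^sub>R v) - \<psi> x) / t)"

definition subdiff :: "('a::real_inner \<Rightarrow> real) \<Rightarrow> 'a \<Rightarrow> 'a set" where
  "subdiff \<phi> x = {v. \<forall>y. \<phi> x + v \<bullet> (y - x) \<le> \<phi> y}"

definition stationary :: "('a::real_inner \<Rightarrow> 'a) \<Rightarrow> ('a \<Rightarrow> real) \<Rightarrow> 'a \<Rightarrow> bool" where
  "stationary gradf \<phi> x \<longleftrightarrow> 0 \<in> {gradf x + v | v. v \<in> subdiff \<phi> x}"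

text \<open>Pseudo-gradient g(x) = u(x) d(x).\<close>
definition is_pseudo_gradient ::
  "('a::real_inner \<Rightarrow> real) \<Rightarrow> ('a \<Rightarrow> bool) \<Rightarrow> ('a \<Rightarrow> real) \<Rightarrow> ('a \<Rightarrow> 'a) \<Rightarrow> bool" where
  "is_pseudo_gradient \<psi> stat u d \<longleftrightarrow>
     (\<forall>x. (stat x \<longrightarrow> d x = 0 \<and> u x = 0) \<and>
          (\<not> stat x \<longrightarrow> norm (d x) = 1 \<and> dirderiv \<psi> x (d x) < 0 \<and>
                         dirderiv \<psi> x (d x) \<le> u x \<and> u x < 0))"

definition C1_on :: "real set \<Rightarrow> (real \<Rightarrow> real) \<Rightarrow> bool" where
  "C1_on S h \<longleftrightarrow> (\<exists>h'. (\<forall>t\<in>S. (h has_real_derivative h' t) (at t)) \<and> continuous_on S h')"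

definition Gamma_max :: "('a::real_normed_vector \<Rightarrow> real) \<Rightarrow> 'a \<Rightarrow> 'a \<Rightarrow> ereal" where
  "Gamma_max \<psi> x v = Sup {ereal T | T. T > 0 \<and> C1_on {0<..<T} (\<lambda>t. \<psi> (x + t *\<^sub>R v))}"

definition Gamma :: "('a::real_normed_vector \<Rightarrow> real) \<Rightarrow> 'a \<Rightarrow> ereal" where
  "Gamma \<psi> x = Inf {Gamma_max \<psi> x v | v. norm v = 1}"

text \<open>Level i with x in S_i minus S_(i+1), where S_(m+1) is empty.\<close>
definition level :: "nat \<Rightarrow> (nat \<Rightarrow> 'a set) \<Rightarrow> 'a \<Rightarrow> nat" where
  "level m S x = (THE i. i \<le> m \<and> x \<in> S i \<and> (i < m \<longrightarrow> x \<notin> S (Suc i)))"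

definition truncation_data ::
  "('a::real_normed_vector \<Rightarrow> real) \<Rightarrow> nat \<Rightarrow> (nat \<Rightarrow> 'a set) \<Rightarrow> ereal \<Rightarrow> real \<Rightarrow> ('a \<Rightarrow> real \<Rightarrow> 'a) \<Rightarrow> bool" where
  "truncation_data \<psi> m S \<delta> \<kappa> T \<longleftrightarrow>
     S 0 = UNIV \<and> (\<forall>i<m. S (Suc i) \<subseteq> S i) \<and> 0 < \<delta> \<and> 0 < \<kappa> \<and>
     (\<forall>x\<in>S m. \<delta> \<le> Gamma \<psi> x) \<and>
     (\<forall>a x i. 0 < a \<and> ereal a \<le> \<delta> \<and> i < m \<and> x \<in> S i \<and> x \<notin> S (Suc i) \<longrightarrow>
        (ereal a \<le> Gamma \<psi> x \<longrightarrow> T x a = x) \<and>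
        (Gamma \<psi> x < ereal a \<longrightarrow> T x a \<in> S (Suc i) \<and> ereal a \<le> Gamma \<psi> (T x a) \<and>
                                     norm (T x a - x) \<le> \<kappa> * a))"

text \<open>The repeat-loop of the truncation step: trunc_loop ... x c x' c' means that
  started at point x with counters c the loop stops with point x' and counters c'.\<close>
inductive trunc_loop ::
  "('a::real_normed_vector \<Rightarrow> real) \<Rightarrow> nat \<Rightarrow> (nat \<Rightarrow> 'a set) \<Rightarrow> (nat \<Rightarrow> real) \<Rightarrow> ('a \<Rightarrow> real \<Rightarrow> 'a)
   \<Rightarrow> 'a \<Rightarrow> (nat \<Rightarrow> nat) \<Rightarrow> 'a \<Rightarrow> (nat \<Rightarrow> nat) \<Rightarrow> bool"
  for \<psi> m S eps T where
  stop: "ereal (eps (c (level m S x))) \<le> Gamma \<psi> x \<Longrightarrow> trunc_loop \<psi> m S eps T x c x c"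
| step: "Gamma \<psi> x < ereal (eps (c (level m S x))) \<Longrightarrow>
         trunc_loop \<psi> m S eps T (T x (eps (c (level m S x))))
                    (c(level m S x := Suc (c (level m S x)))) x' c' \<Longrightarrow>
         trunc_loop \<psi> m S eps T x c x' c'"

definition model :: "real \<Rightarrow> real^'n \<Rightarrow> real^'n^'n \<Rightarrow> real^'n \<Rightarrow> real" where
  "model psix g B s = psix + g \<bullet> s + 1/2 * (s \<bullet> (B *v s))"

definition safe_alpha :: "(real^'n \<Rightarrow> real^'n \<Rightarrow> ereal) \<Rightarrow> real^'n \<Rightarrow> real^'n \<Rightarrow> real" where
  "safe_alpha Gs x s = real_of_ereal (min (Gs x (sgn s)) (ereal (norm s)))"

definition alg_sdir ::
  "(real^'n \<Rightarrow> real) \<Rightarrow> (real^'n \<Rightarrow> real) \<Rightarrow> (real^'n \<Rightarrow> real^'n) \<Rightarrow> (real^'n \<Rightarrow> real^'n \<Rightarrow> ereal)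
   \<Rightarrow> (nat \<Rightarrow> real^'n) \<Rightarrow> (nat \<Rightarrow> real^'n^'n) \<Rightarrow> (nat \<Rightarrow> real^'n) \<Rightarrow> (nat \<Rightarrow> real) \<Rightarrow> nat \<Rightarrow> real^'n" where
  "alg_sdir \<psi> u d Gs x B s aC k =
     (let xk = x k; g = u xk *\<^sub>R d xk; M = model (\<psi> xk) g (B k); sk = s k;
          sC = - (aC k) *\<^sub>R g; a = safe_alpha Gs xk sk
      in if M 0 - M (a *\<^sub>R sgn sk) < a / (2 * norm sk) * (M 0 - M sk) then sC else sk)"

definition alg_alpha ::
  "(real^'n \<Rightarrow> real) \<Rightarrow> (real^'n \<Rightarrow> real) \<Rightarrow> (real^'n \<Rightarrow> real^'n) \<Rightarrow> (real^'n \<Rightarrow> real^'n \<Rightarrow> ereal)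
   \<Rightarrow> (nat \<Rightarrow> real^'n) \<Rightarrow> (nat \<Rightarrow> real^'n^'n) \<Rightarrow> (nat \<Rightarrow> real^'n) \<Rightarrow> (nat \<Rightarrow> real) \<Rightarrow> nat \<Rightarrow> real" where
  "alg_alpha \<psi> u d Gs x B s aC k = safe_alpha Gs (x k) (alg_sdir \<psi> u d Gs x B s aC k)"

text \<open>One iteration k of the algorithm (for non-stationary x^k): Cauchy point, choice of s^k,
  ratio tests, radius update, trial point and truncation step producing x^(k+1), c^(k+1).\<close>
definition alg_iter ::
  "(real^'n \<Rightarrow> real) \<Rightarrow> (real^'n \<Rightarrow> real) \<Rightarrow> (real^'n \<Rightarrow> real^'n) \<Rightarrow> (real^'n \<Rightarrow> real^'n \<Rightarrow> ereal)
   \<Rightarrow> nat \<Rightarrow> (nat \<Rightarrow> (real^'n) set) \<Rightarrow> (real^'n \<Rightarrow> real \<Rightarrow> real^'n)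
   \<Rightarrow> real \<Rightarrow> real \<Rightarrow> real \<Rightarrow> real \<Rightarrow> real \<Rightarrow> real \<Rightarrow> real \<Rightarrow> real \<Rightarrow> (nat \<Rightarrow> real) \<Rightarrow> (real \<Rightarrow> real)
   \<Rightarrow> (nat \<Rightarrow> real^'n) \<Rightarrow> (nat \<Rightarrow> real) \<Rightarrow> (nat \<Rightarrow> nat \<Rightarrow> nat) \<Rightarrow> (nat \<Rightarrow> real^'n^'n)
   \<Rightarrow> (nat \<Rightarrow> real^'n) \<Rightarrow> (nat \<Rightarrow> real) \<Rightarrow> nat \<Rightarrow> bool" where
  "alg_iter \<psi> u d Gs m S T \<eta> \<eta>1 \<eta>2 r1 r2 Dmax \<gamma>1 \<gamma>2 eps ell x D c B s aC k \<longleftrightarrow>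
    (let xk = x k; g = u xk *\<^sub>R d xk; M = model (\<psi> xk) g (B k); sk = s k;
         sC = - (aC k) *\<^sub>R g;
         \<rho>1 = (\<psi> xk - \<psi> (xk + sk)) / (M 0 - M sk);
         sd = alg_sdir \<psi> u d Gs x B s aC k;
         a = alg_alpha \<psi> u d Gs x B s aC k;
         \<rho>2 = (\<psi> xk - \<psi> (xk + a *\<^sub>R sgn sd)) / (M 0 - M (a *\<^sub>R sgn sd))
     in 0 \<le> aC k \<and> aC k \<le> D k / norm g \<and>
        (\<forall>t. 0 \<le> t \<and> t \<le> D k / norm g \<longrightarrow> M (- (aC k) *\<^sub>R g) \<le> M (- t *\<^sub>R g)) \<and>
        norm sk \<le> D k \<and>
        \<gamma>1 / 2 * norm g * min (D k) (\<gamma>2 * norm g) \<le> M 0 - M sk \<and>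
        (1 - ell (norm sk)) * (M 0 - M sC) \<le> M 0 - M sk \<and>
        (\<exists>xt. (if \<eta>1 \<le> \<rho>1 then
                 xt = xk + sk \<and>
                 D (Suc k) = (if \<eta>2 < \<rho>1 then min Dmax (r2 * D k) else D k)
               else
                 D (Suc k) = (if \<rho>2 < \<eta>1 then r1 * D k
                              else if \<eta>2 < \<rho>2 then min Dmax (r2 * D k) else D k) \<and>
                 xt = (if \<eta> \<le> \<rho>2 then xk + a *\<^sub>R sgn sd else xk)) \<and>
              trunc_loop \<psi> m S eps T xt (c k) (x (Suc k)) (c (Suc k))))"

definition alg_run ::
  "(real^'n \<Rightarrow> real) \<Rightarrow> (real^'n \<Rightarrow> real) \<Rightarrow> (real^'n \<Rightarrow> real^'n) \<Rightarrow> (real^'n \<Rightarrow> real^'n \<Rightarrow> ereal)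
   \<Rightarrow> nat \<Rightarrow> (nat \<Rightarrow> (real^'n) set) \<Rightarrow> ereal \<Rightarrow> real \<Rightarrow> (real^'n \<Rightarrow> real \<Rightarrow> real^'n)
   \<Rightarrow> real \<Rightarrow> real \<Rightarrow> real \<Rightarrow> real \<Rightarrow> real \<Rightarrow> real \<Rightarrow> real \<Rightarrow> real \<Rightarrow> (nat \<Rightarrow> real) \<Rightarrow> (real \<Rightarrow> real)
   \<Rightarrow> (nat \<Rightarrow> real^'n) \<Rightarrow> (nat \<Rightarrow> real) \<Rightarrow> (nat \<Rightarrow> nat \<Rightarrow> nat) \<Rightarrow> (nat \<Rightarrow> real^'n^'n)
   \<Rightarrow> (nat \<Rightarrow> real^'n) \<Rightarrow> (nat \<Rightarrow> real) \<Rightarrow> bool" where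
  "alg_run \<psi> u d Gs m S \<delta> \<kappa> T \<eta> \<eta>1 \<eta>2 r1 r2 Dmax \<gamma>1 \<gamma>2 eps ell x D c B s aC \<longleftrightarrow>
     0 < \<eta> \<and> \<eta> < \<eta>1 \<and> \<eta>1 < \<eta>2 \<and> \<eta>2 < 1 \<and> 0 < r1 \<and> r1 < 1 \<and> 1 < r2 \<and>
     0 < Dmax \<and> 0 < \<gamma>1 \<and> 0 < \<gamma>2 \<and>
     (\<forall>j. 0 < eps j \<and> eps (Suc j) < eps j \<and> ereal (eps j) \<le> \<delta>) \<and> summable eps \<and>
     (\<forall>t>0. 0 \<le> ell t \<and> ell t \<le> 1/2) \<and> (\<forall>t t'. 0 < t \<and> t \<le> t' \<longrightarrow> ell t' \<le> ell t) \<and>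
     (ell \<longlongrightarrow> 0) (at_right 0) \<and>
     (\<forall>y v. 0 < Gs y v) \<and>
     truncation_data \<psi> m S \<delta> \<kappa> T \<and>
     0 < D 0 \<and> c 0 = (\<lambda>_. 0) \<and>
     (\<forall>k. alg_iter \<psi> u d Gs m S T \<eta> \<eta>1 \<eta>2 r1 r2 Dmax \<gamma>1 \<gamma>2 eps ell x D c B s aC k)"

end

theory Submission
  imports Defs
begin

lemma safe_min_bd:
  fixes G :: ereal and n :: real
  assumes "0 < G" "0 \<le> n"
  shows "0 \<le> real_of_ereal (min G (ereal n)) \<and> real_of_ereal (min G (ereal n)) \<le> n"
  using assms by (cases G) (auto simp: min_def)

lemma half_le_aux: "0 < (a::real) \<Longrightarrow> y \<le> a \<Longrightarrow> y / 2 \<le> a"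
  by linarith

theorem lemma4p6:
  fixes f \<phi> :: "real^'n \<Rightarrow> real" and gradf :: "real^'n \<Rightarrow> real^'n"
    and u :: "real^'n \<Rightarrow> real" and d :: "real^'n \<Rightarrow> real^'n"
    and Gs :: "real^'n \<Rightarrow> real^'n \<Rightarrow> ereal"
    and m :: nat and S :: "nat \<Rightarrow> (real^'n) set" and \<delta> :: ereal and \<kappa> :: real
    and T :: "real^'n \<Rightarrow> real \<Rightarrow> real^'n"
    and \<eta> \<eta>1 \<eta>2 r1 r2 Dmax \<gamma>1 \<gamma>2 :: real and eps :: "nat \<Rightarrow> real" and ell :: "real \<Rightarrow> real"
    and x :: "nat \<Rightarrow> real^'n" and D :: "nat \<Rightarrow> real" and c :: "nat \<Rightarrow> nat \<Rightarrow> nat"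
    and B :: "nat \<Rightarrow> real^'n^'n" and s :: "nat \<Rightarrow> real^'n" and aC :: "nat \<Rightarrow> real"
    and \<psi> :: "real^'n \<Rightarrow> real"
    and alpha :: "nat \<Rightarrow> real" and sb :: "nat \<Rightarrow> real^'n"
  assumes f_C1: "\<forall>y. (f has_derivative (\<lambda>h. gradf y \<bullet> h)) (at y)" "continuous_on UNIV gradf"
    and \<phi>_convex: "convex_on UNIV \<phi>"
    and \<psi>_def: "\<psi> = (\<lambda>y. f y + \<phi> y)"
    and pg: "is_pseudo_gradient \<psi> (stationary gradf \<phi>) u d"
    and run: "alg_run \<psi> u d Gs m S \<delta> \<kappa> T \<eta> \<eta>1 \<eta>2 r1 r2 Dmax \<gamma>1 \<gamma>2 eps ell x D c B s aC"
    and nonterm: "\<forall>k. u (x k) *\<^sub>R d (x k) \<noteq> 0"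
    and alpha_def: "\<forall>k. alpha k = alg_alpha \<psi> u d Gs x B s aC k"
    and sb_def: "\<forall>k. sb k = sgn (alg_sdir \<psi> u d Gs x B s aC k)"
    and bounded: "\<exists>R>0. \<forall>k. x k \<in> ball 0 R"
    and B3: "\<forall>r::nat \<Rightarrow> nat. strict_mono r \<and> convergent (\<lambda>l. x (r l)) \<and> (\<lambda>l. alpha (r l)) \<longlonglongrightarrow> 0 \<longrightarrow>
               (\<lambda>l. \<psi> (x (r l) + alpha (r l) *\<^sub>R sb (r l)) - \<psi> (x (r l))
                     - alpha (r l) * dirderiv \<psi> (x (r l)) (sb (r l)))
               \<in> o[sequentially](\<lambda>l. alpha (r l))"
  shows "\<exists>h :: real \<Rightarrow> ereal. (\<forall>\<Delta>>0. 0 \<le> h \<Delta>) \<and> (h \<longlongrightarrow> 0) (at_right 0) \<and>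
           (\<forall>\<Delta>>0. \<forall>k. D k \<le> \<Delta> \<longrightarrow>
              ereal (\<psi> (x k + alpha k *\<^sub>R sb k) - \<psi> (x k) - alpha k * dirderiv \<psi> (x k) (sb k))
                \<le> h \<Delta> * ereal (alpha k))"
proof -
  have Gpos: "\<forall>y v. 0 < Gs y v" and iter: "\<forall>k. alg_iter \<psi> u d Gs m S T \<eta> \<eta>1 \<eta>2 r1 r2 Dmax \<gamma>1 \<gamma>2 eps ell x D c B s aC k"
    using run unfolding alg_run_def by blast+
  have alpha_bd: "0 \<le> alpha k \<and> alpha k \<le> D k" for k
  proof -
    let ?g = "u (x k) *\<^sub>R d (x k)"
    let ?sd = "alg_sdir \<psi> u d Gs x B s aC k"
    have i: "0 \<le> aC k \<and> aC k \<le> D k / norm ?g \<and> norm (s k) \<le> D k"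
      using iter[rule_format, of k] unfolding alg_iter_def Let_def by blast
    have gnz: "norm ?g > 0" using nonterm by auto
    have sd: "?sd = s k \<or> ?sd = - (aC k) *\<^sub>R ?g" unfolding alg_sdir_def Let_def by auto
    have nsd: "norm ?sd \<le> D k"
    proof (cases "?sd = s k")
      case True then show ?thesis using i by simp
    next
      case False
      then have "?sd = - (aC k) *\<^sub>R ?g" using sd by blast
      then have "norm ?sd = aC k * norm ?g" using i by (simp only: norm_minus_cancel norm_scaleR) simp
      also have "\<dots> \<le> D k" using i gnz by (simp add: pos_le_divide_eq)
      finally show ?thesis .
    qed
    have a: "alpha k = real_of_ereal (min (Gs (x k) (sgn ?sd)) (ereal (norm ?sd)))"
      using alpha_def unfolding alg_alpha_def safe_alpha_def by blast
    have "0 \<le> real_of_ereal (min (Gs (x k) (sgn ?sd)) (ereal (norm ?sd))) \<and>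
          real_of_ereal (min (Gs (x k) (sgn ?sd)) (ereal (norm ?sd))) \<le> norm ?sd"
      using Gpos[rule_format, of "x k" "sgn ?sd"] by (intro safe_min_bd) auto
    then show ?thesis using a nsd by linarith
  qed
  define L where "L k = \<psi> (x k + alpha k *\<^sub>R sb k) - \<psi> (x k) - alpha k * dirderiv \<psi> (x k) (sb k)" for k
  have key: "\<forall>\<epsilon>>0. \<exists>\<Delta>0>0. \<forall>k. D k \<le> \<Delta>0 \<and> 0 < alpha k \<longrightarrow> L k / alpha k \<le> \<epsilon>"
  proof (rule ccontr)
    assume "\<not> ?thesis"
    then obtain \<epsilon> where \<epsilon>: "\<epsilon> > 0" "\<forall>\<Delta>0>0. \<exists>k. D k \<le> \<Delta>0 \<and> 0 < alpha k \<and> \<epsilon> < L k / alpha k"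
      by (auto simp: not_le)
    have "\<forall>N j. \<exists>k>N. D k \<le> 1 / real (Suc j) \<and> 0 < alpha k \<and> \<epsilon> < L k / alpha k"
    proof (intro allI)
      fix N j
      define A where "A = insert 1 (alpha ` {i. i \<le> N \<and> 0 < alpha i})"
      define mm where "mm = Min A"
      have fin: "finite A" unfolding A_def by simp
      have mpos: "0 < mm" unfolding mm_def using fin by (subst Min_gr_iff) (auto simp: A_def)
      have mle: "mm \<le> alpha i" if "i \<le> N" "0 < alpha i" for i
        unfolding mm_def using fin that by (intro Min_le) (auto simp: A_def)
      have "min (1 / real (Suc j)) mm / 2 > 0" using mpos by simp
      then obtain k where k: "D k \<le> min (1 / real (Suc j)) mm / 2" "0 < alpha k" "\<epsilon> < L k / alpha k"
        using \<epsilon>(2) by blast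
      have m1: "min (1 / real (Suc j)) mm \<le> mm" "min (1 / real (Suc j)) mm \<le> 1 / real (Suc j)" by simp_all
      have "N < k"
      proof (rule ccontr)
        assume "\<not> N < k"
        then have "mm \<le> alpha k" using mle k(2) by simp
        then show False using alpha_bd[of k] k(1) m1 mpos by linarith
      qed
      moreover have "D k \<le> 1 / real (Suc j)" 
      proof -
        have "0 < 1 / real (Suc j)" by simp
        then have "min (1 / real (Suc j)) mm / 2 \<le> 1 / real (Suc j)" using m1 mpos half_le_aux by blast
        then show ?thesis using k(1) by linarith
      qed
      ultimately show "\<exists>k>N. D k \<le> 1 / real (Suc j) \<and> 0 < alpha k \<and> \<epsilon> < L k / alpha k" using k by blast
    qed
    then obtain F where F: "\<And>N j. N < F N j \<and> D (F N j) \<le> 1 / real (Suc j) \<and> 0 < alpha (F N j) \<and> \<epsilon> < L (F N j) / alpha (F N j)"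
      by metis
    define r where "r = rec_nat (F 0 0) (\<lambda>j k. F k (Suc j))"
    have r0: "r 0 = F 0 0" and rS: "\<And>j. r (Suc j) = F (r j) (Suc j)" by (simp_all add: r_def)
    have rP: "D (r j) \<le> 1 / real (Suc j) \<and> 0 < alpha (r j) \<and> \<epsilon> < L (r j) / alpha (r j)" for j
      by (cases j) (simp_all only: r0 rS F)
    have smr: "strict_mono r" unfolding strict_mono_Suc_iff using rS F by metis
    have ar: "(\<lambda>j. alpha (r j)) \<longlonglongrightarrow> 0"
    proof (rule tendsto_sandwich[of "\<lambda>_. 0" _ _ "\<lambda>j. inverse (real (Suc j))"])
      show "\<forall>\<^sub>F n in sequentially. 0 \<le> alpha (r n)" using alpha_bd by simp
      show "\<forall>\<^sub>F n in sequentially. alpha (r n) \<le> inverse (real (Suc n))"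
        proof (intro always_eventually allI)
        fix n show "alpha (r n) \<le> inverse (real (Suc n))"
          using alpha_bd[of "r n"] rP[of n] by (simp only: inverse_eq_divide) linarith
      qed
    qed (rule tendsto_const, rule LIMSEQ_inverse_real_of_nat)
    obtain R where R: "\<forall>k. x k \<in> ball 0 R" using bounded by blast
    have "bounded (range (\<lambda>j. x (r j)))" using R by (intro bounded_subset[OF bounded_ball[of 0 R]]) auto
    then obtain l r2 where r2: "strict_mono r2" "((\<lambda>j. x (r j)) \<circ> r2) \<longlonglongrightarrow> l"
      using bounded_imp_convergent_subsequence by blast
    define rr where "rr = r \<circ> r2"
    have smrr: "strict_mono rr" unfolding rr_def using smr r2(1) by (rule strict_mono_o)
    have cv: "convergent (\<lambda>l. x (rr l))" using r2(2) unfolding rr_def o_def convergent_def by blast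
    have arr: "(\<lambda>l. alpha (rr l)) \<longlonglongrightarrow> 0" using LIMSEQ_subseq_LIMSEQ[OF ar r2(1)] unfolding rr_def o_def .
    have "(\<lambda>l. L (rr l)) \<in> o[sequentially](\<lambda>l. alpha (rr l))"
      using B3 smrr cv arr unfolding L_def by blast
    then have "eventually (\<lambda>l. norm (L (rr l)) \<le> \<epsilon> * norm (alpha (rr l))) sequentially"
      using \<epsilon>(1) by (rule landau_o.smallD)
    then obtain l0 where l0: "norm (L (rr l0)) \<le> \<epsilon> * norm (alpha (rr l0))"
      by (auto simp: eventually_sequentially)
    have "0 < alpha (rr l0)" "\<epsilon> < L (rr l0) / alpha (rr l0)" using rP[of "r2 l0"] unfolding rr_def by auto
    then have "\<epsilon> * alpha (rr l0) < L (rr l0)" by (simp add: pos_less_divide_eq)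
    then show False using l0 \<open>0 < alpha (rr l0)\<close> by simp
  qed
  define h where "h \<Delta> = max 0 (SUP k\<in>{k. D k \<le> \<Delta> \<and> 0 < alpha k}. ereal (L k / alpha k))" for \<Delta>
  show ?thesis
  proof (intro exI[of _ h] conjI allI impI)
    fix \<Delta> :: real assume "0 < \<Delta>" then show "0 \<le> h \<Delta>" unfolding h_def by simp
  next
    fix \<Delta> :: real and k assume "0 < \<Delta>" "D k \<le> \<Delta>"
    show "ereal (\<psi> (x k + alpha k *\<^sub>R sb k) - \<psi> (x k) - alpha k * dirderiv \<psi> (x k) (sb k)) \<le> h \<Delta> * ereal (alpha k)"
    proof (cases "alpha k = 0")
      case True then show ?thesis by (simp flip: zero_ereal_def)
    next
      case False
      then have ap: "0 < alpha k" using alpha_bd[of k] by simp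
      have "ereal (L k / alpha k) \<le> (SUP k\<in>{k. D k \<le> \<Delta> \<and> 0 < alpha k}. ereal (L k / alpha k))"
        using ap \<open>D k \<le> \<Delta>\<close> by (intro SUP_upper) auto
      then have "ereal (L k / alpha k) \<le> h \<Delta>" unfolding h_def by (rule order_trans) simp
      then have "ereal (L k / alpha k) * ereal (alpha k) \<le> h \<Delta> * ereal (alpha k)"
        using ap by (intro ereal_mult_right_mono) auto
      moreover have "ereal (L k / alpha k) * ereal (alpha k) = ereal (L k)" using ap by simp
      ultimately show ?thesis unfolding L_def by simp
    qed
  next
    show "(h \<longlongrightarrow> 0) (at_right 0)"
    proof (rule order_tendstoI)
      fix a :: ereal assume "a < 0"
      then show "\<forall>\<^sub>F \<Delta> in at_right 0. a < h \<Delta>"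
        unfolding h_def by (intro always_eventually allI) (auto intro: less_le_trans)
    next
      fix a :: ereal assume "0 < a"
      then obtain e where e: "0 < ereal e" "ereal e < a" using ereal_dense2 by blast
      then have "0 < e" by simp
      then obtain \<Delta>0 where d0: "\<Delta>0 > 0" "\<forall>k. D k \<le> \<Delta>0 \<and> 0 < alpha k \<longrightarrow> L k / alpha k \<le> e"
        using key by blast
      have "\<forall>\<^sub>F \<Delta> in at_right 0. \<Delta> \<in> {0<..<\<Delta>0}" using d0(1) by (rule eventually_at_right_real)
      then show "\<forall>\<^sub>F \<Delta> in at_right 0. h \<Delta> < a"
      proof (rule eventually_mono)
        fix \<Delta> assume "\<Delta> \<in> {0<..<\<Delta>0}"
        then have "h \<Delta> \<le> ereal e" unfolding h_def using d0(2) \<open>0 < e\<close>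
          by (intro max.boundedI SUP_least) auto
        then show "h \<Delta> < a" using e(2) by simp
      qed
    qed
  qed
qed

end
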